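(* For integers $n\ge 10$ and $1\le j\le n$ let $$A_j=\Big(\frac{n!}{(n-j)!}\Big)^2\frac{1}{j!}\exp\Big\{-2j\log n\Big(1-\frac jn\Big)-2j\Big\}.$$ Then $\sum_{j=1}^{\lfloor n/4\rfloor}A_j\le 2/3$ and $\sum_{j\in\mathbb Z,\ n/4\le j\le n/2}A_j\le 1/4$.
   Context: $\log$ denotes the natural logarithm. *)

theory Defs
  imports Complex_Main
begin

definition A :: "nat \<Rightarrow> nat \<Rightarrow> real" where
  "A n j = (fact n / fact (n - j)) ^ 2 * (1 / fact j) *
     exp (- 2 * real j * ln (real n) * (1 - real j / real n) - 2 * real j)"

end

theory Submission
  imports Defs "HOL-Analysis.Analysis"
begin

lemma ln_fact_lower:
  assumes "j \<ge> 1"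
  shows "1 + real j * ln (real j) - real j \<le> ln (fact j)"
  using assms
proof (induction j rule: dec_induct)
  case base
  then show ?case by simp
next
  case (step j)
  have jp: "real j > 0" using step by simp
  have "ln (1 + 1 / real j) \<le> 1 / real j" using jp
    by (metis add.commute add_diff_cancel_left' ln_le_minus_one add_pos_pos less_numeral_extra(1) divide_pos_pos)
  moreover have "ln (1 + 1 / real j) = ln (real j + 1) - ln (real j)"
  proof -
    have "1 + 1 / real j = (real j + 1) / real j" using jp by (simp add: field_simps)
    thus ?thesis using jp by (simp add: ln_div)
  qed
  ultimately have k0: "ln (real j + 1) - ln (real j) \<le> 1 / real j" by simp
  have k: "real j * (ln (real j + 1) - ln (real j)) \<le> 1"
  proof -
    have "real j * (ln (real j + 1) - ln (real j)) \<le> real j * (1 / real j)"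
      using k0 jp by (intro mult_left_mono) auto
    thus ?thesis using jp by simp
  qed
  have k': "real j * ln (real j + 1) \<le> 1 + real j * ln (real j)"
    using k by (simp add: right_diff_distrib)
  have lf: "ln (fact (Suc j) :: real) = ln (real j + 1) + ln (fact j)"
    by (simp add: ln_mult add.commute)
  have sj: "real (Suc j) = real j + 1" by simp
  have d: "(real j + 1) * ln (real j + 1) = real j * ln (real j + 1) + ln (real j + 1)"
    by (simp add: distrib_right)
  show ?case unfolding lf sj d using step.IH k' by linarith
qed

lemma fact_ratio_upper:
  assumes "j \<le> n" "n > 0"
  shows "fact n / fact (n - j) \<le> exp (real j * ln (real n) - real j * (real j - 1) / (2 * real n))"
  using assms(1)
proof (induction j)
  case 0
  then show ?case by simp
next
  case (Suc j)
  have np: "real n > 0" using assms by simp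
  have IH: "fact n / fact (n - j) \<le> exp (real j * ln (real n) - real j * (real j - 1) / (2 * real n))"
    using Suc by simp
  have e: "fact (n - j) = real (n - j) * (fact (n - Suc j) :: real)"
    using Suc.prems by (metis Suc_diff_Suc fact_Suc le_simps(3) of_nat_fact)
  have nj: "real (n - j) > 0" using Suc.prems by simp
  have Fp: "(fact (n - Suc j) :: real) > 0" by simp
  have gen: "\<And>a m F::real. m > 0 \<Longrightarrow> F > 0 \<Longrightarrow> a / F = a / (m * F) * m"
    by (simp add: field_simps)
  have eq: "fact n / fact (n - Suc j) = fact n / fact (n - j) * real (n - j)"
    unfolding e by (rule gen[OF nj Fp])
  have "real (n - j) = real n * (1 - real j / real n)" using Suc.prems np
    by (simp add: of_nat_diff field_simps)
  also have "\<dots> \<le> real n * exp (- (real j / real n))"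
    using np by (intro mult_left_mono) (auto, metis add_uminus_conv_diff exp_ge_add_one_self)
  also have "\<dots> = exp (ln (real n) - real j / real n)" using np by (simp add: exp_diff exp_minus divide_inverse)
  finally have b: "real (n - j) \<le> exp (ln (real n) - real j / real n)" .
  have "fact n / fact (n - Suc j) \<le> exp (real j * ln (real n) - real j * (real j - 1) / (2 * real n)) * exp (ln (real n) - real j / real n)"
    unfolding eq by (intro mult_mono IH b) auto
  also have "\<dots> = exp (real (Suc j) * ln (real n) - real (Suc j) * (real (Suc j) - 1) / (2 * real n))"
    unfolding exp_add[symmetric] using np by (simp add: field_simps)
  finally show ?case .
qed

lemma ln_n_bound:
  assumes "n \<ge> (10::nat)"
  shows "ln (real n) \<le> real n / 4"
proof -
  have "(13/8::real) \<le> exp (1/2)" using exp_lower_Taylor_quadratic[of "1/2"] by (simp add: power2_eq_square)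
  hence "(13/8::real)^5 \<le> exp (1/2) ^ 5" by (intro power_mono) auto
  also have "exp (1/2::real) ^ 5 = exp (5/2)" by (simp flip: exp_of_nat_mult)
  finally have "(13/8::real)^5 \<le> exp (5/2)" .
  moreover have "(10::real) \<le> (13/8)^5" by (simp add: power_numeral_reduce)
  ultimately have "(10::real) \<le> exp (5/2)" by linarith
  hence l10: "ln 10 \<le> (5/2::real)" by (metis exp_le_cancel_iff exp_ln zero_less_numeral)
  have "ln (real n / 10) \<le> real n / 10 - 1" using assms by (intro ln_le_minus_one) auto
  moreover have "ln (real n / 10) = ln (real n) - ln 10" using assms by (simp add: ln_div)
  ultimately show ?thesis using l10 assms by simp
qed

lemma ln2_bound: "ln (2::real) \<le> 9/10"
proof -
  have "(2::real) \<le> exp (9/10)" using exp_lower_Taylor_quadratic[of "9/10"] by (simp add: power2_eq_square)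
  thus ?thesis by (metis exp_le_cancel_iff exp_ln zero_less_numeral)
qed

lemma term_bound:
  assumes n: "n \<ge> 10" and j: "1 \<le> j" "real j \<le> real n / 2"
  shows "A n j \<le> exp (- 1 - real j / 2)"
proof -
  define L where "L = ln (real n)"
  have np: "real n > 0" using n by simp
  have jp: "real j > 0" using j by simp
  have jn: "j \<le> n" using j by linarith
  define c where "c = (2 * L - 1) / real n"
  define q where "q = (\<lambda>x::real. c * x - ln x)"
  have conv: "convex_on {1..real n / 2} q"
  proof -
    have c1: "convex_on {1..real n / 2} (\<lambda>x::real. c * x)"
      by (rule convex_onI) (auto simp: algebra_simps)
    have c2: "concave_on {1..real n / 2} ln"
      using ln_concave by (simp add: concave_on_def) (rule convex_on_subset, auto)
    show ?thesis unfolding q_def by (rule convex_on_diff[OF c1 c2])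
  qed
  have qj: "q (real j) \<le> max (q 1) (q (real n / 2))"
    by (rule convex_on_le_max[OF conv]) (use j in auto)
  have Ln: "L \<le> real n / 4" unfolding L_def using ln_n_bound[OF n] .
  have q1: "q 1 \<le> 1/2 - 1 / real n" unfolding q_def c_def using Ln np by (simp add: field_simps)
  have "q (real n / 2) = ln 2 - 1/2" unfolding q_def c_def L_def using np by (simp add: ln_div field_simps)
  also have "\<dots> \<le> 1/2 - 1 / real n"
  proof -
    have "real n * ln 2 \<le> real n * (9/10)" using ln2_bound by (intro mult_left_mono) auto
    hence "1 \<le> real n - real n * ln 2" using n by linarith
    hence "1 \<le> (1 - ln 2) * real n" by (simp add: left_diff_distrib mult.commute[of "ln 2"])
    hence "1 / real n \<le> 1 - ln 2" using np by (simp add: pos_divide_le_eq)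
    thus ?thesis by simp
  qed
  finally have q2: "q (real n / 2) \<le> 1/2 - 1 / real n" .
  have qb: "q (real j) \<le> 1/2 - 1 / real n" using qj q1 q2 by simp
  define P where "P = (fact n / fact (n - j) :: real)"
  have P0: "P \<ge> 0" unfolding P_def by simp
  have Pb: "P \<le> exp (real j * L - real j * (real j - 1) / (2 * real n))"
    unfolding P_def L_def using fact_ratio_upper[OF jn] n by simp
  have P2: "P ^ 2 \<le> exp (2 * real j * L - real j * (real j - 1) / real n)"
  proof -
    have "P^2 \<le> exp (real j * L - real j * (real j - 1) / (2 * real n)) ^ 2"
      by (intro power_mono Pb P0)
    also have "\<dots> = exp (2 * real j * L - real j * (real j - 1) / real n)"
      using np by (simp flip: exp_of_nat_mult add: field_simps)
    finally show ?thesis .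
  qed
  have F: "1 / fact j \<le> exp (- (1 + real j * ln (real j) - real j))"
  proof -
    have "exp (1 + real j * ln (real j) - real j) \<le> exp (ln (fact j))"
      using ln_fact_lower[OF j(1)] by (subst exp_le_cancel_iff)
    also have "\<dots> = fact j" by simp
    finally have h: "exp (1 + real j * ln (real j) - real j) \<le> fact j" .
    have "1 / fact j \<le> 1 / exp (1 + real j * ln (real j) - real j)"
      using h by (intro divide_left_mono) auto
    thus ?thesis by (simp only: exp_minus inverse_eq_divide)
  qed
  have "A n j = P^2 * (1 / fact j) * exp (- 2 * real j * L * (1 - real j / real n) - 2 * real j)"
    unfolding A_def P_def L_def by simp
  also have "\<dots> \<le> exp (2 * real j * L - real j * (real j - 1) / real n) * exp (- (1 + real j * ln (real j) - real j))
      * exp (- 2 * real j * L * (1 - real j / real n) - 2 * real j)"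
    by (intro mult_mono P2 F) auto
  also have "\<dots> = exp (real j * (q (real j) + 1 / real n - 1) - 1)"
    unfolding exp_add[symmetric] q_def c_def using np by (simp add: field_simps)
  also have "\<dots> \<le> exp (- 1 - real j / 2)"
  proof -
    have "real j * (q (real j) + 1 / real n - 1) \<le> real j * (- 1/2)"
      using qb jp by (intro mult_left_mono) auto
    thus ?thesis by simp
  qed
  finally show ?thesis .
qed

lemma geo_tail:
  fixes r :: real
  assumes r: "0 \<le> r" "r < 1" and S: "finite S" "S \<subseteq> {k..}"
  shows "(\<Sum>j\<in>S. r ^ j) \<le> r ^ k / (1 - r)"
proof -
  have inj: "inj_on (\<lambda>j. j - k) S"
  proof (rule inj_onI)
    fix x y assume "x \<in> S" "y \<in> S" "x - k = y - k"
    moreover have "k \<le> x" "k \<le> y" using S calculation by auto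
    ultimately show "x = y" by arith
  qed
  have "(\<Sum>j\<in>S. r ^ j) = (\<Sum>i\<in>(\<lambda>j. j - k) ` S. r ^ (i + k))"
    using S by (subst sum.reindex[OF inj]) (auto intro!: sum.cong)
  also have "\<dots> \<le> (\<Sum>i. r ^ (i + k))"
    using r S by (intro sum_le_suminf) (auto intro!: summable_mult2 simp: power_add)
  also have "\<dots> = r ^ k / (1 - r)"
    using r by (simp add: power_add suminf_mult2[symmetric] suminf_geometric divide_simps)
  finally show ?thesis .
qed

theorem lemma4p7:
  fixes n :: nat
  assumes "n \<ge> 10"
  shows "(\<Sum>j = 1..n div 4. A n j) \<le> 2 / 3 \<and>
    (\<Sum>j \<in> {j::nat. real n / 4 \<le> real j \<and> real j \<le> real n / 2}. A n j) \<le> 1 / 4"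
proof -
  define r where "r = exp (- 1/2 :: real)"
  have r0: "0 \<le> r" unfolding r_def by simp
  have "(13/8::real) \<le> exp (1/2)" using exp_lower_Taylor_quadratic[of "1/2"] by (simp add: power2_eq_square)
  hence r8: "r \<le> 8/13" unfolding r_def by (simp add: exp_minus field_simps)
  have r1: "r < 1" using r8 by simp
  have ex: "exp (- 1 - real j / 2) = r ^ (j + 2)" for j
  proof -
    have "exp (- 1 - real j / 2) = exp (real (j+2) * (- 1/2))" by (simp add: field_simps)
    thus ?thesis unfolding r_def by (simp only: exp_of_nat_mult)
  qed
  have key: "(\<Sum>j\<in>S. A n j) \<le> r ^ (k + 2) / (1 - r)"
    if S: "finite S" "S \<subseteq> {k..}" "\<And>j. j \<in> S \<Longrightarrow> 1 \<le> j \<and> real j \<le> real n / 2" for S k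
  proof -
    have "(\<Sum>j\<in>S. A n j) \<le> (\<Sum>j\<in>S. r ^ (j + 2))"
      using S term_bound[OF assms] ex by (intro sum_mono) auto
    also have "\<dots> = (\<Sum>j\<in>(\<lambda>j. j + 2) ` S. r ^ j)"
      by (subst sum.reindex) (auto simp: inj_on_def)
    also have "\<dots> \<le> r ^ (k + 2) / (1 - r)"
      using S by (intro geo_tail r0 r1) auto
    finally show ?thesis .
  qed
  have num: "r ^ m / (1 - r) \<le> (8/13) ^ m / (5/13)" for m
    using r0 r8 by (intro frac_le power_mono) auto
  have s1: "(\<Sum>j = 1..n div 4. A n j) \<le> r ^ (1 + 2) / (1 - r)"
  proof (rule key)
    fix j assume "j \<in> {1..n div 4}"
    hence "1 \<le> j" "4 * j \<le> n" by auto
    thus "1 \<le> j \<and> real j \<le> real n / 2" by simp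
  qed auto
  have s2: "(\<Sum>j \<in> {j::nat. real n / 4 \<le> real j \<and> real j \<le> real n / 2}. A n j) \<le> r ^ (3 + 2) / (1 - r)"
  proof (rule key)
    show "finite {j::nat. real n / 4 \<le> real j \<and> real j \<le> real n / 2}"
      by (rule finite_subset[of _ "{..n}"]) auto
    show "{j::nat. real n / 4 \<le> real j \<and> real j \<le> real n / 2} \<subseteq> {3..}"
    proof
      fix j assume "j \<in> {j::nat. real n / 4 \<le> real j \<and> real j \<le> real n / 2}"
      hence "real n \<le> 4 * real j" by simp
      hence "n \<le> 4 * j" by linarith
      thus "j \<in> {3..}" using assms by simp
    qed
    fix j assume "j \<in> {j::nat. real n / 4 \<le> real j \<and> real j \<le> real n / 2}"
    hence "real n \<le> 4 * real j" "real j \<le> real n / 2" by auto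
    hence "n \<le> 4 * j" by linarith
    thus "1 \<le> j \<and> real j \<le> real n / 2" using assms \<open>real j \<le> real n / 2\<close> by simp
  qed
  have "(8/13::real) ^ (1 + 2) / (5/13) \<le> 2/3" by (simp add: power_numeral_reduce)
  moreover have "(8/13::real) ^ (3 + 2) / (5/13) \<le> 1/4" by (simp add: power_numeral_reduce)
  ultimately show ?thesis using s1 s2 num[of "1+2"] num[of "3+2"] by linarith
qed

end
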